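(* Let $(\mathcal{A},\cdot,[\cdot,\cdot],\alpha)$ be a Hom-Poisson algebra, let $\lambda\in\mathbb{C}$ be fixed, and let $D$ be a derivation of $(\mathcal{A},\cdot)$ such that $D\alpha=\alpha D$ and $D([x,y])=[D(x),y]+[x,D(y)]+\lambda[x,y]$ for all $x,y\in\mathcal{A}$. Define $x\circ y=x\cdot D(y)+\lambda\, x\cdot y$ for $x,y\in\mathcal{A}$. Then $(\mathcal{A},[\cdot,\cdot],\circ,\alpha)$ is a Hom Gel'fand-Dorfman bialgebra.
   Context: All vector spaces are over $\mathbb{C}$. A Hom-associative algebra is a vector space with a bilinear map $\cdot$ and linear map $\alpha$ such that $\alpha(x)\cdot(y\cdot z)=(x\cdot y)\cdot\alpha(z)$; it is commutative if $x\cdot y=y\cdot x$. A Hom-Lie algebra is a vector space with a bilinear map $[\cdot,\cdot]$ and linear map $\alpha$ with $[x,y]=-[y,x]$ and $[[x,y],\alpha(z)]+[[y,z],\alpha(x)]+[[z,x],\alpha(y)]=0$. A Hom-Poisson algebra is a vector space $\mathcal{A}$ with operations $\cdot$, $[\cdot,\cdot]$ and a linear endomorphism $\alpha$ such that $(\mathcal{A},\cdot,\alpha)$ is a commutative Hom-associative algebra, $(\mathcal{A},[\cdot,\cdot],\alpha)$ is a Hom-Lie algebra, and $[\alpha(x),y\cdot z]=\alpha(y)\cdot[x,z]+\alpha(z)\cdot[x,y]$ for all $x,y,z$. A derivation of $(\mathcal{A},\cdot)$ is a linear map $D$ with $D(x\cdot y)=D(x)\cdot y+x\cdot D(y)$.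 A Hom-Novikov algebra is a vector space with a bilinear operation $\circ$ and a linear endomorphism $\alpha$ such that $(x\circ y)\circ\alpha(z)-\alpha(x)\circ(y\circ z)=(y\circ x)\circ\alpha(z)-\alpha(y)\circ(x\circ z)$ and $(x\circ y)\circ\alpha(z)=(x\circ z)\circ\alpha(y)$. A Hom Gel'fand-Dorfman bialgebra is a vector space $\mathcal{A}$ with a linear endomorphism $\alpha$ and two bilinear operations $[\cdot,\cdot],\circ$ such that $(\mathcal{A},[\cdot,\cdot],\alpha)$ is a Hom-Lie algebra, $(\mathcal{A},\circ,\alpha)$ is a Hom-Novikov algebra, and $[x\circ y,\alpha(z)]-[x\circ z,\alpha(y)]+[x,y]\circ\alpha(z)-[x,z]\circ\alpha(y)-\alpha(x)\circ[y,z]=0$ for all $x,y,z$. *)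

theory Defs
  imports Complex_Main
begin

text \<open>A complex vector space is modelled as a type 'a of class ab_group_add together with a
  scalar multiplication sc :: complex => 'a => 'a satisfying the vector space axioms
  (locale vector_space).\<close>

definition clin :: "(complex \<Rightarrow> 'a::ab_group_add \<Rightarrow> 'a) \<Rightarrow> ('a \<Rightarrow> 'a) \<Rightarrow> bool" where
  "clin sc f \<longleftrightarrow> Vector_Spaces.linear sc sc f"

definition cbilinear :: "(complex \<Rightarrow> 'a::ab_group_add \<Rightarrow> 'a) \<Rightarrow> ('a \<Rightarrow> 'a \<Rightarrow> 'a) \<Rightarrow> bool" where
  "cbilinear sc m \<longleftrightarrow> (\<forall>x. clin sc (m x)) \<and> (\<forall>y. clin sc (\<lambda>x. m x y))"

definition hom_assoc :: "(complex \<Rightarrow> 'a::ab_group_add \<Rightarrow> 'a) \<Rightarrow> ('a \<Rightarrow> 'a \<Rightarrow> 'a) \<Rightarrow> ('a \<Rightarrow> 'a) \<Rightarrow> bool" where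
  "hom_assoc sc m \<alpha> \<longleftrightarrow> vector_space sc \<and> cbilinear sc m \<and> clin sc \<alpha> \<and>
     (\<forall>x y z. m (\<alpha> x) (m y z) = m (m x y) (\<alpha> z))"

definition comm_hom_assoc :: "(complex \<Rightarrow> 'a::ab_group_add \<Rightarrow> 'a) \<Rightarrow> ('a \<Rightarrow> 'a \<Rightarrow> 'a) \<Rightarrow> ('a \<Rightarrow> 'a) \<Rightarrow> bool" where
  "comm_hom_assoc sc m \<alpha> \<longleftrightarrow> hom_assoc sc m \<alpha> \<and> (\<forall>x y. m x y = m y x)"

definition hom_lie :: "(complex \<Rightarrow> 'a::ab_group_add \<Rightarrow> 'a) \<Rightarrow> ('a \<Rightarrow> 'a \<Rightarrow> 'a) \<Rightarrow> ('a \<Rightarrow> 'a) \<Rightarrow> bool" where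
  "hom_lie sc b \<alpha> \<longleftrightarrow> vector_space sc \<and> cbilinear sc b \<and> clin sc \<alpha> \<and>
     (\<forall>x y. b x y = - b y x) \<and>
     (\<forall>x y z. b (b x y) (\<alpha> z) + b (b y z) (\<alpha> x) + b (b z x) (\<alpha> y) = 0)"

definition hom_poisson :: "(complex \<Rightarrow> 'a::ab_group_add \<Rightarrow> 'a) \<Rightarrow> ('a \<Rightarrow> 'a \<Rightarrow> 'a) \<Rightarrow> ('a \<Rightarrow> 'a \<Rightarrow> 'a) \<Rightarrow> ('a \<Rightarrow> 'a) \<Rightarrow> bool" where
  "hom_poisson sc m b \<alpha> \<longleftrightarrow> comm_hom_assoc sc m \<alpha> \<and> hom_lie sc b \<alpha> \<and>
     (\<forall>x y z. b (\<alpha> x) (m y z) = m (\<alpha> y) (b x z) + m (\<alpha> z) (b x y))"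

definition derivation :: "(complex \<Rightarrow> 'a::ab_group_add \<Rightarrow> 'a) \<Rightarrow> ('a \<Rightarrow> 'a \<Rightarrow> 'a) \<Rightarrow> ('a \<Rightarrow> 'a) \<Rightarrow> bool" where
  "derivation sc m D \<longleftrightarrow> clin sc D \<and> (\<forall>x y. D (m x y) = m (D x) y + m x (D y))"

definition hom_novikov :: "(complex \<Rightarrow> 'a::ab_group_add \<Rightarrow> 'a) \<Rightarrow> ('a \<Rightarrow> 'a \<Rightarrow> 'a) \<Rightarrow> ('a \<Rightarrow> 'a) \<Rightarrow> bool" where
  "hom_novikov sc c \<alpha> \<longleftrightarrow> vector_space sc \<and> cbilinear sc c \<and> clin sc \<alpha> \<and>
     (\<forall>x y z. c (c x y) (\<alpha> z) - c (\<alpha> x) (c y z) = c (c y x) (\<alpha> z) - c (\<alpha> y) (c x z)) \<and>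
     (\<forall>x y z. c (c x y) (\<alpha> z) = c (c x z) (\<alpha> y))"

definition hom_GD_bialgebra :: "(complex \<Rightarrow> 'a::ab_group_add \<Rightarrow> 'a) \<Rightarrow> ('a \<Rightarrow> 'a \<Rightarrow> 'a) \<Rightarrow> ('a \<Rightarrow> 'a \<Rightarrow> 'a) \<Rightarrow> ('a \<Rightarrow> 'a) \<Rightarrow> bool" where
  "hom_GD_bialgebra sc b c \<alpha> \<longleftrightarrow> hom_lie sc b \<alpha> \<and> hom_novikov sc c \<alpha> \<and>
     (\<forall>x y z. b (c x y) (\<alpha> z) - b (c x z) (\<alpha> y) + c (b x y) (\<alpha> z) - c (b x z) (\<alpha> y)
              - c (\<alpha> x) (b y z) = 0)"

end

theory Submission
  imports Defs
begin

lemma clinD: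
  assumes "clin sc f"
  shows "f (x + y) = f x + f y" "f (sc c x) = sc c (f x)"
  using assms unfolding clin_def Vector_Spaces.linear_iff by auto

lemma clin_lin:
  assumes "clin sc f" shows "f 0 = 0" "f (- x) = - f x" "f (x - y) = f x - f y"
proof -
  show z: "f 0 = 0" using clinD(1)[OF assms, of 0 0] by simp
  show n: "f (- x) = - f x" using clinD(1)[OF assms, of x "-x"] z by (metis add.commute add_eq_0_iff add.right_inverse)
  show "f (x - y) = f x - f y" using clinD(1)[OF assms, of x "-y"] clinD(1)[OF assms, of y "-y"] z
    by (metis add.commute add_eq_0_iff add.right_inverse diff_conv_add_uminus)
qed

lemma clinI:
  assumes "vector_space sc" "\<And>x y. f (x + y) = f x + f y" "\<And>c x. f (sc c x) = sc c (f x)"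
  shows "clin sc f"
  using assms unfolding clin_def Vector_Spaces.linear_iff by auto

theorem theorem3p15:
  fixes sc :: "complex \<Rightarrow> 'a::ab_group_add \<Rightarrow> 'a"
    and m b :: "'a \<Rightarrow> 'a \<Rightarrow> 'a" and \<alpha> D :: "'a \<Rightarrow> 'a" and lam :: complex
  assumes "hom_poisson sc m b \<alpha>"
    and "derivation sc m D"
    and "\<forall>x. D (\<alpha> x) = \<alpha> (D x)"
    and "\<forall>x y. D (b x y) = b (D x) y + b x (D y) + sc lam (b x y)"
  shows "hom_GD_bialgebra sc b (\<lambda>x y. m x (D y) + sc lam (m x y)) \<alpha>"
proof -
  from assms(1) have VS: "vector_space sc" and mbil: "cbilinear sc m" and al: "clin sc \<alpha>"
    and massoc: "\<And>x y z. m (\<alpha> x) (m y z) = m (m x y) (\<alpha> z)"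
    and mcomm: "\<And>x y. m x y = m y x"
    and HL: "hom_lie sc b \<alpha>" and bbil: "cbilinear sc b"
    and banti: "\<And>x y. b x y = - b y x"
    and pois: "\<And>x y z. b (\<alpha> x) (m y z) = m (\<alpha> y) (b x z) + m (\<alpha> z) (b x y)"
    unfolding hom_poisson_def comm_hom_assoc_def hom_assoc_def hom_lie_def by blast+
  interpret V: vector_space sc by (rule VS)
  from assms(2) have Dl: "clin sc D" and Dm: "\<And>x y. D (m x y) = m (D x) y + m x (D y)"
    unfolding derivation_def by auto
  have mR: "clin sc (m x)" and mL: "clin sc (\<lambda>y. m y x)" for x using mbil unfolding cbilinear_def by auto
  have bR: "clin sc (b x)" and bL: "clin sc (\<lambda>y. b y x)" for x using bbil unfolding cbilinear_def by auto
  define E where "E y = D y + sc lam y" for y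
  have El: "clin sc E"
    by (rule clinI[OF VS]) (auto simp: E_def clinD[OF Dl] V.scale_right_distrib V.scale_left_commute)
  have c_eq: "(\<lambda>x y. m x (D y) + sc lam (m x y)) = (\<lambda>x y. m x (E y))"
    by (auto simp: E_def clinD[OF mR] intro!: ext)
  have Ea: "E (\<alpha> z) = \<alpha> (E z)" for z using assms(3) by (simp add: E_def clinD[OF al])
  have Em: "E (m y w) = m (E y) w + m y (D w)" for y w
    using clinD[OF mL[of w]] by (simp add: E_def Dm V.scale_right_distrib algebra_simps)
  have Eb: "E (b y z) = b (E y) z + b y (E z)" for y z
    using clinD[OF bL[of z]] clinD[OF bR[of y]] assms(4)
    by (simp add: E_def V.scale_right_distrib algebra_simps)
  have mswap: "m (\<alpha> x) (m y w) = m (\<alpha> y) (m x w)" for x y w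
    by (metis massoc mcomm)
  have nov: "hom_novikov sc (\<lambda>x y. m x (E y)) \<alpha>"
    unfolding hom_novikov_def
  proof (intro conjI allI)
    show "vector_space sc" by (rule VS)
    show "clin sc \<alpha>" by (rule al)
    show "cbilinear sc (\<lambda>x y. m x (E y))"
      unfolding cbilinear_def
      by (auto intro!: clinI[OF VS] simp: clinD[OF El] clinD[OF mR] clinD[OF mL])
    fix x y z
    have "m (m x (E y)) (\<alpha> (E z)) = m (\<alpha> x) (m (E y) (E z))" by (simp add: massoc)
    moreover have "m (m x (E z)) (\<alpha> (E y)) = m (\<alpha> x) (m (E z) (E y))" by (simp add: massoc)
    moreover have "m (E y) (E z) = m (E z) (E y)" by (rule mcomm)
    ultimately show "m (m x (E y)) (E (\<alpha> z)) = m (m x (E z)) (E (\<alpha> y))"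
      by (simp only: Ea)
    have "m (m x (E y)) (E (\<alpha> z)) - m (\<alpha> x) (E (m y (E z))) = - m (\<alpha> x) (m y (D (E z)))"
      by (simp add: Ea massoc[symmetric] Em clinD[OF mR] clin_lin[OF mR])
    moreover have "m (m y (E x)) (E (\<alpha> z)) - m (\<alpha> y) (E (m x (E z))) = - m (\<alpha> y) (m x (D (E z)))"
      by (simp add: Ea massoc[symmetric] Em clinD[OF mR] clin_lin[OF mR])
    ultimately show "m (m x (E y)) (E (\<alpha> z)) - m (\<alpha> x) (E (m y (E z))) =
        m (m y (E x)) (E (\<alpha> z)) - m (\<alpha> y) (E (m x (E z)))"
      by (simp add: mswap)
  qed
  have P: "b (m u v) (\<alpha> w) = m (\<alpha> u) (b v w) + m (\<alpha> v) (b u w)" for u v w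
  proof -
    have "b (m u v) (\<alpha> w) = - b (\<alpha> w) (m u v)" by (rule banti)
    also have "\<dots> = - (m (\<alpha> u) (b w v) + m (\<alpha> v) (b w u))" by (simp only: pois)
    also have "\<dots> = m (\<alpha> u) (b v w) + m (\<alpha> v) (b u w)"
      using banti[of w v] banti[of w u] by (simp add: clin_lin[OF mR])
    finally show ?thesis .
  qed
  have GD: "b (m x (E y)) (\<alpha> z) - b (m x (E z)) (\<alpha> y) + m (b x y) (E (\<alpha> z)) - m (b x z) (E (\<alpha> y))
        - m (\<alpha> x) (E (b y z)) = 0" for x y z
  proof -
    have 1: "b (m x (E y)) (\<alpha> z) = m (\<alpha> x) (b (E y) z) + m (\<alpha> (E y)) (b x z)" by (rule P)
    have 2: "b (m x (E z)) (\<alpha> y) = - m (\<alpha> x) (b y (E z)) + m (\<alpha> (E z)) (b x y)"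
      using P[of x "E z" y] banti[of "E z" y] by (simp add: clin_lin[OF mR])
    have 3: "m (b x y) (E (\<alpha> z)) = m (\<alpha> (E z)) (b x y)" using Ea mcomm by metis
    have 4: "m (b x z) (E (\<alpha> y)) = m (\<alpha> (E y)) (b x z)" using Ea mcomm by metis
    have 5: "m (\<alpha> x) (E (b y z)) = m (\<alpha> x) (b (E y) z) + m (\<alpha> x) (b y (E z))"
      by (simp only: Eb clinD[OF mR])
    show ?thesis unfolding 1 2 3 4 5 by (simp add: algebra_simps)
  qed
  show ?thesis unfolding c_eq hom_GD_bialgebra_def using HL nov GD by blast
qed

end
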